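(* For $\mathbf{x}\in\mathcal{B}^\Sigma_{e,n}$, $\mathbf{y}\in\mathcal{B}^\Sigma_{d,m}$ and $\mathbf{v}\in\mathcal{B}^\Sigma_{d,n}$, we have $\Delta(\mathbf{y}\cdot\mathbf{v})=\Delta(\mathbf{y})\cdot\Delta(\mathbf{v})$ and $\Delta(\mathbf{x}*\mathbf{v})=\Delta(\mathbf{x})*\Delta(\mathbf{v})$.
   Context: Let $\mathbf{k}$ be a field of characteristic $0$ and $B=\bigoplus_{d\ge0}B_d$ a commutative graded $\mathbf{k}$-algebra with $B_0=\mathbf{k}$, generated by $B_1$, $\dim B_1<\infty$. Let $\mathcal{B}^\Sigma=\bigoplus_{n,d}\mathcal{B}^\Sigma_{d,n}$ with $\mathcal{B}^\Sigma_{d,n}=(B_d^{\otimes n})^{\Sigma_n}$ ($\Sigma_n$ permuting factors). Product $\cdot$: for $f\in\mathcal{B}^\Sigma_{d,n}$, $g\in\mathcal{B}^\Sigma_{d,m}$, $f\cdot g=\sum_\sigma f\cdot_\sigma g$ where $\sigma$ runs over subsets $\{i_1<\cdots<i_n\}\subseteq[n+m]$ and $f\cdot_\sigma g$ places the factors of $f$ in positions $i_1,\dots,i_n$ and those of $g$ in the complementary positions in order (zero between different $d$). Product $*:\mathcal{B}^\Sigma_{d,n}\otimes\mathcal{B}^\Sigma_{e,n}\to\mathcal{B}^\Sigma_{d+e,n}$ is factorwise multiplication $(u_1\otimes\cdots\otimes u_n)*(v_1\otimes\cdots\otimes v_n)=u_1v_1\otimes\cdots\otimes u_nv_n$ (zero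 for different $n$). For fixed $d$, $\bigoplus_n\mathcal{B}^\Sigma_{d,n}$ is a free divided power algebra under $\cdot$ generated by $\mathcal{B}^\Sigma_{d,1}=B_d$; $\Delta:\mathcal{B}^\Sigma\to\mathcal{B}^\Sigma\otimes\mathcal{B}^\Sigma$ is the unique $\cdot$-algebra homomorphism with $\Delta(w)=1\otimes w+w\otimes1$ for $w\in\mathcal{B}^\Sigma_{d,1}$ (all $d$). The products $\cdot$ and $*$ are extended to $\mathcal{B}^\Sigma\otimes\mathcal{B}^\Sigma$ componentwise: $(a\otimes b)\cdot(c\otimes e)=(a\cdot c)\otimes(b\cdot e)$ and $(a\otimes b)*(c\otimes e)=(a*c)\otimes(b*e)$. *)

theory Defs
  imports "HOL-Combinatorics.Permutations"
begin

text \<open>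
The graded algebra B is described by a basis of each graded piece:
B_d has basis b^d_0, ..., b^d_{dim d - 1}, and the multiplication B_d x B_e -> B_{d+e}
is given by structure constants:  b^d_i b^e_j = sum_l  c d e i j l  b^{d+e}_l.
An element of the tensor power B_d^{(tensor n)} is given by its coefficient function on
basis tuples, i.e. on lists t of length n with entries < dim d.
An element F of the big algebra B^Sigma = (+)_{d,n} (B_d^{tensor n})^{Sigma_n} is a
function  F d t  (coefficient of the basis tensor t in degree d; n = length t),
finitely supported, and symmetric under permutations of the tensor factors.
An element of B^Sigma (tensor) B^Sigma is a function  G d d' s t  (coefficient of
(basis tensor s in degree d) (tensor) (basis tensor t in degree d')).
\<close>

type_synonym 'k elt = "nat \<Rightarrow> nat list \<Rightarrow> 'k"
type_synonym 'k elt2 = "nat \<Rightarrow> nat \<Rightarrow> nat list \<Rightarrow> nat list \<Rightarrow> 'k"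

definition tuples :: "(nat \<Rightarrow> nat) \<Rightarrow> nat \<Rightarrow> nat \<Rightarrow> nat list set" where
  "tuples dim d n = {s. length s = n \<and> set s \<subseteq> {..<dim d}}"

text \<open>Coordinates (in B_{length is}) of the product of degree-one basis elements b^1_i.\<close>
primrec mprod :: "(nat \<Rightarrow> nat) \<Rightarrow> (nat \<Rightarrow> nat \<Rightarrow> nat \<Rightarrow> nat \<Rightarrow> nat \<Rightarrow> 'k::field)
    \<Rightarrow> nat list \<Rightarrow> nat \<Rightarrow> 'k" where
  "mprod dim c [] = (\<lambda>l. if l = 0 then 1 else 0)"
| "mprod dim c (i # is) =
     (\<lambda>l. \<Sum>j<dim (length is). mprod dim c is j * c 1 (length is) i j l)"

text \<open>B is a commutative graded k-algebra with B_0 = k, generated by B_1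
 (dim B_1 finite is automatic in this model).\<close>
definition graded_alg :: "(nat \<Rightarrow> nat) \<Rightarrow> (nat \<Rightarrow> nat \<Rightarrow> nat \<Rightarrow> nat \<Rightarrow> nat \<Rightarrow> 'k::field) \<Rightarrow> bool" where
  "graded_alg dim c \<longleftrightarrow>
     dim 0 = 1
   \<and> (\<forall>e j l. j < dim e \<longrightarrow> l < dim e \<longrightarrow> c 0 e 0 j l = (if j = l then 1 else 0))
   \<and> (\<forall>d e i j l. i < dim d \<longrightarrow> j < dim e \<longrightarrow> l < dim (d + e) \<longrightarrow> c d e i j l = c e d j i l)
   \<and> (\<forall>d e f i j k m. i < dim d \<longrightarrow> j < dim e \<longrightarrow> k < dim f \<longrightarrow> m < dim (d + e + f) \<longrightarrow>
        (\<Sum>l<dim (d + e). c d e i j l * c (d + e) f l k m)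
      = (\<Sum>l<dim (e + f). c e f j k l * c d (e + f) i l m))
   \<and> (\<forall>d (w :: nat \<Rightarrow> 'k). \<exists>a :: nat list \<Rightarrow> 'k.
        \<forall>l<dim d. w l = (\<Sum>is\<in>tuples dim 1 d. a is * mprod dim c is l))"

definition perm_list :: "(nat \<Rightarrow> nat) \<Rightarrow> nat list \<Rightarrow> nat list" where
  "perm_list \<sigma> t = map (\<lambda>i. t ! \<sigma> i) [0..<length t]"

definition is_elt :: "(nat \<Rightarrow> nat) \<Rightarrow> 'k::field elt \<Rightarrow> bool" where
  "is_elt dim F \<longleftrightarrow>
     finite {(d, t). F d t \<noteq> 0}
   \<and> (\<forall>d t. F d t \<noteq> 0 \<longrightarrow> set t \<subseteq> {..<dim d})
   \<and> (\<forall>d t \<sigma>. \<sigma> permutes {..<length t} \<longrightarrow> F d (perm_list \<sigma> t) = F d t)"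

definition is_hom_elt :: "(nat \<Rightarrow> nat) \<Rightarrow> nat \<Rightarrow> nat \<Rightarrow> 'k::field elt \<Rightarrow> bool" where
  "is_hom_elt dim d n F \<longleftrightarrow> is_elt dim F \<and> (\<forall>d' t. F d' t \<noteq> 0 \<longrightarrow> d' = d \<and> length t = n)"

definition is_elt2 :: "(nat \<Rightarrow> nat) \<Rightarrow> 'k::field elt2 \<Rightarrow> bool" where
  "is_elt2 dim G \<longleftrightarrow>
     finite {(d, d', s, t). G d d' s t \<noteq> 0}
   \<and> (\<forall>d d' s t. G d d' s t \<noteq> 0 \<longrightarrow> set s \<subseteq> {..<dim d} \<and> set t \<subseteq> {..<dim d'})
   \<and> (\<forall>d d' s t \<sigma>. \<sigma> permutes {..<length s} \<longrightarrow> G d d' (perm_list \<sigma> s) t = G d d' s t)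
   \<and> (\<forall>d d' s t \<sigma>. \<sigma> permutes {..<length t} \<longrightarrow> G d d' s (perm_list \<sigma> t) = G d d' s t)"

definition dot :: "'k::field elt \<Rightarrow> 'k elt \<Rightarrow> 'k elt" where
  "dot F G = (\<lambda>d t. \<Sum>S\<in>Pow {..<length t}. F d (nths t S) * G d (nths t (- S)))"

definition dot2 :: "'k::field elt2 \<Rightarrow> 'k elt2 \<Rightarrow> 'k elt2" where
  "dot2 G H = (\<lambda>d d' s t. \<Sum>S\<in>Pow {..<length s}. \<Sum>T\<in>Pow {..<length t}.
      G d d' (nths s S) (nths t T) * H d d' (nths s (- S)) (nths t (- T)))"

definition coefprod :: "(nat \<Rightarrow> nat \<Rightarrow> nat \<Rightarrow> nat \<Rightarrow> nat \<Rightarrow> 'k::field)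
    \<Rightarrow> nat \<Rightarrow> nat \<Rightarrow> nat list \<Rightarrow> nat list \<Rightarrow> nat list \<Rightarrow> 'k" where
  "coefprod c d e s s' t = (\<Prod>j<length t. c d e (s ! j) (s' ! j) (t ! j))"

definition star :: "(nat \<Rightarrow> nat) \<Rightarrow> (nat \<Rightarrow> nat \<Rightarrow> nat \<Rightarrow> nat \<Rightarrow> nat \<Rightarrow> 'k::field)
    \<Rightarrow> 'k elt \<Rightarrow> 'k elt \<Rightarrow> 'k elt" where
  "star dim c F G = (\<lambda>D t. if set t \<subseteq> {..<dim D} then
      (\<Sum>d\<le>D. \<Sum>s\<in>tuples dim d (length t). \<Sum>s'\<in>tuples dim (D - d) (length t).
         F d s * G (D - d) s' * coefprod c d (D - d) s s' t)
    else 0)"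

definition star2 :: "(nat \<Rightarrow> nat) \<Rightarrow> (nat \<Rightarrow> nat \<Rightarrow> nat \<Rightarrow> nat \<Rightarrow> nat \<Rightarrow> 'k::field)
    \<Rightarrow> 'k elt2 \<Rightarrow> 'k elt2 \<Rightarrow> 'k elt2" where
  "star2 dim c G H = (\<lambda>D D' s t. if set s \<subseteq> {..<dim D} \<and> set t \<subseteq> {..<dim D'} then
      (\<Sum>d\<le>D. \<Sum>d'\<le>D'.
         \<Sum>s1\<in>tuples dim d (length s). \<Sum>s2\<in>tuples dim (D - d) (length s).
         \<Sum>t1\<in>tuples dim d' (length t). \<Sum>t2\<in>tuples dim (D' - d') (length t).
           G d d' s1 t1 * H (D - d) (D' - d') s2 t2
           * coefprod c d (D - d) s1 s2 s * coefprod c d' (D' - d') t1 t2 t)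
    else 0)"

definition unit_elt :: "nat \<Rightarrow> 'k::field elt" where
  "unit_elt d = (\<lambda>d' t. if d' = d \<and> t = [] then 1 else 0)"

definition unit2 :: "nat \<Rightarrow> 'k::field elt2" where
  "unit2 d = (\<lambda>d1 d2 s t. if d1 = d \<and> d2 = d \<and> s = [] \<and> t = [] then 1 else 0)"

definition prim :: "nat \<Rightarrow> 'k::field elt \<Rightarrow> 'k elt2" where
  "prim d W = (\<lambda>d1 d2 s t. if d1 = d \<and> d2 = d then
       (if s = [] then W d t else 0) + (if t = [] then W d s else 0) else 0)"

definition is_Delta :: "(nat \<Rightarrow> nat) \<Rightarrow> ('k::field elt \<Rightarrow> 'k elt2) \<Rightarrow> bool" where
  "is_Delta dim \<Delta> \<longleftrightarrow>
     (\<forall>F. is_elt dim F \<longrightarrow> is_elt2 dim (\<Delta> F))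
   \<and> (\<forall>F G. is_elt dim F \<longrightarrow> is_elt dim G \<longrightarrow>
        \<Delta> (\<lambda>d t. F d t + G d t) = (\<lambda>d d' s t. \<Delta> F d d' s t + \<Delta> G d d' s t))
   \<and> (\<forall>a F. is_elt dim F \<longrightarrow> \<Delta> (\<lambda>d t. a * F d t) = (\<lambda>d d' s t. a * \<Delta> F d d' s t))
   \<and> (\<forall>F G. is_elt dim F \<longrightarrow> is_elt dim G \<longrightarrow> \<Delta> (dot F G) = dot2 (\<Delta> F) (\<Delta> G))
   \<and> (\<forall>d. \<Delta> (unit_elt d) = unit2 d)
   \<and> (\<forall>d W. is_hom_elt dim d 1 W \<longrightarrow> \<Delta> W = prim d W)"

end

theory Submission
  imports Defs
begin


lemma perm_list_eq: "perm_list = permute_list"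
  by (auto simp: perm_list_def permute_list_def fun_eq_iff)

lemma sym_mset:
  fixes f :: "nat list \<Rightarrow> 'b"
  shows
  "(\<forall>t \<sigma>. \<sigma> permutes {..<length t} \<longrightarrow> f (perm_list \<sigma> t) = f t) \<longleftrightarrow>
   (\<forall>t t'. mset t = mset t' \<longrightarrow> f t = f t')"
proof
  assume H: "\<forall>t \<sigma>. \<sigma> permutes {..<length t} \<longrightarrow> f (perm_list \<sigma> t) = f t"
  show "\<forall>t t'. mset t = mset t' \<longrightarrow> f t = f t'"
  proof (intro allI impI)
    fix t t' :: "nat list" assume "mset t = mset t'"
    then obtain p where "p permutes {..<length t'}" "permute_list p t' = t"
      by (rule mset_eq_permutation)
    then show "f t = f t'" using H[rule_format, of p t'] by (simp add: perm_list_eq)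
  qed
next
  assume H: "\<forall>t t'. mset t = mset t' \<longrightarrow> f t = f t'"
  show "\<forall>t \<sigma>. \<sigma> permutes {..<length t} \<longrightarrow> f (perm_list \<sigma> t) = f t"
  proof (intro allI impI)
    fix t :: "nat list" and \<sigma> assume p: "\<sigma> permutes {..<length t}"
    show "f (perm_list \<sigma> t) = f t"
      using H[rule_format, of "perm_list \<sigma> t" t] p by (simp add: perm_list_eq)
  qed
qed

lemma is_elt_iff:
  "is_elt dim F \<longleftrightarrow> finite {(d, t). F d t \<noteq> 0}
   \<and> (\<forall>d t. F d t \<noteq> 0 \<longrightarrow> set t \<subseteq> {..<dim d})
   \<and> (\<forall>d t t'. mset t = mset t' \<longrightarrow> F d t = F d t')"
proof -
  have "(\<forall>d t \<sigma>. \<sigma> permutes {..<length t} \<longrightarrow> F d (perm_list \<sigma> t) = F d t) \<longleftrightarrow>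
        (\<forall>d t t'. mset t = mset t' \<longrightarrow> F d t = F d t')"
  proof
    assume H: "\<forall>d t \<sigma>. \<sigma> permutes {..<length t} \<longrightarrow> F d (perm_list \<sigma> t) = F d t"
    show "\<forall>d t t'. mset t = mset t' \<longrightarrow> F d t = F d t'"
    proof (rule allI)
      fix d
      have "\<forall>t \<sigma>. \<sigma> permutes {..<length t} \<longrightarrow> F d (perm_list \<sigma> t) = F d t" by (rule spec[OF H])
      then show "\<forall>t t'. mset t = mset t' \<longrightarrow> F d t = F d t'" by (rule iffD1[OF sym_mset[of "F d"]])
    qed
  next
    assume H: "\<forall>d t t'. mset t = mset t' \<longrightarrow> F d t = F d t'"
    show "\<forall>d t \<sigma>. \<sigma> permutes {..<length t} \<longrightarrow> F d (perm_list \<sigma> t) = F d t"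
    proof (rule allI)
      fix d
      have "\<forall>t t'. mset t = mset t' \<longrightarrow> F d t = F d t'" by (rule spec[OF H])
      then show "\<forall>t \<sigma>. \<sigma> permutes {..<length t} \<longrightarrow> F d (perm_list \<sigma> t) = F d t" by (rule iffD2[OF sym_mset[of "F d"]])
    qed
  qed
  then show ?thesis unfolding is_elt_def by (rule arg_cong[where f="\<lambda>x. _ \<and> _ \<and> x"])
qed

lemma mset_nths_compl: "mset (nths xs A) + mset (nths xs (-A)) = mset xs"
proof (induction xs arbitrary: A)
  case Nil then show ?case by simp
next
  case (Cons x xs)
  have e: "{j. Suc j \<in> - A} = - {j. Suc j \<in> A}" by auto
  have IH: "mset (nths xs {j. Suc j \<in> A}) + mset (nths xs {j. Suc j \<notin> A}) = mset xs"
    using Cons.IH[of "{j. Suc j \<in> A}"] by (simp add: Collect_neg_eq)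
  show ?case by (cases "0 \<in> A") (simp_all add: nths_Cons flip: IH)
qed

lemma nths_single: "k < length t \<Longrightarrow> nths t {k} = [t ! k]"
proof -
  assume k: "k < length t"
  have "{i. i < length t \<and> i \<in> {k}} = {k}" using k by auto
  then have l: "length (nths t {k}) = 1" by (simp add: length_nths)
  have s: "set (nths t {k}) = {t ! k}" using k by (auto simp: set_nths)
  from l obtain a where "nths t {k} = [a]" by (cases "nths t {k}") auto
  with s show ?thesis by simp
qed

lemma nths_eq_single:
  assumes "S \<subseteq> {..<length t}"
  shows "nths t S = [j] \<longleftrightarrow> (\<exists>k<length t. S = {k} \<and> t ! k = j)"
proof
  assume h: "nths t S = [j]"
  have "{i. i < length t \<and> i \<in> S} = S" using assms by auto
  then have "card S = 1" using h length_nths[of t S] by simp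
  then obtain k where S: "S = {k}" by (auto simp: card_Suc_eq)
  then have "k < length t" using assms by auto
  moreover have "t ! k = j" using h S nths_single[OF \<open>k < length t\<close>] by simp
  ultimately show "\<exists>k<length t. S = {k} \<and> t ! k = j" using S by blast
next
  assume "\<exists>k<length t. S = {k} \<and> t ! k = j"
  then show "nths t S = [j]" using nths_single by auto
qed

lemma sum_count_len: "set t \<subseteq> A \<Longrightarrow> finite A \<Longrightarrow> (\<Sum>j\<in>A. count (mset t) j) = length t"
proof (induction t)
  case Nil then show ?case by simp
next
  case (Cons a t)
  have "(\<Sum>j\<in>A. count (mset (a # t)) j) = (\<Sum>j\<in>A. count (mset t) j + (if a = j then 1 else 0))"
    by (intro sum.cong) auto
  also have "\<dots> = (\<Sum>j\<in>A. count (mset t) j) + 1"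
    using Cons.prems by (simp add: sum.distrib)
  finally show ?case using Cons by simp
qed



lemma nths_cong_lt: "(\<And>i. i < length xs \<Longrightarrow> i \<in> A \<longleftrightarrow> i \<in> B) \<Longrightarrow> nths xs A = nths xs B"
  unfolding nths_def
  by (rule arg_cong[where f="map fst"], rule filter_cong) (auto simp: set_zip)

lemma sum_pow_split:
  "(\<Sum>U\<in>Pow {..<a+b}. h U) = (\<Sum>S\<in>Pow {..<a}. \<Sum>T\<in>Pow {..<b::nat}. h (S \<union> (\<lambda>k. k + a) ` T))"
proof -
  have "(\<Sum>S\<in>Pow {..<a}. \<Sum>T\<in>Pow {..<b::nat}. h (S \<union> (\<lambda>k. k + a) ` T))
      = (\<Sum>p\<in>Pow {..<a} \<times> Pow {..<b}. h (fst p \<union> (\<lambda>k. k + a) ` snd p))"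
    by (simp add: sum.cartesian_product case_prod_beta)
  also have "\<dots> = (\<Sum>U\<in>Pow {..<a+b}. h U)"
  proof (rule sum.reindex_bij_witness[where i = "\<lambda>U. (U \<inter> {..<a}, {k. k + a \<in> U})"
        and j = "\<lambda>p. fst p \<union> (\<lambda>k. k + a) ` snd p"])
    fix p assume p: "p \<in> Pow {..<a} \<times> Pow {..<b}"
    then show "((fst p \<union> (\<lambda>k. k + a) ` snd p) \<inter> {..<a}, {k. k + a \<in> fst p \<union> (\<lambda>k. k + a) ` snd p}) = p"
      by (cases p) auto
    show "fst p \<union> (\<lambda>k. k + a) ` snd p \<in> Pow {..<a + b}" using p by auto
  next
    fix U assume U: "U \<in> Pow {..<a+b}"
    show "fst (U \<inter> {..<a}, {k. k + a \<in> U}) \<union> (\<lambda>k. k + a) ` snd (U \<inter> {..<a}, {k. k + a \<in> U}) = U"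
    proof -
      have "(U \<inter> {..<a}) \<union> (\<lambda>k. k + a) ` {k. k + a \<in> U} = U"
      proof (rule set_eqI)
        fix x show "x \<in> (U \<inter> {..<a}) \<union> (\<lambda>k. k + a) ` {k. k + a \<in> U} \<longleftrightarrow> x \<in> U"
        proof (cases "x < a")
          case True then show ?thesis by auto
        next
          case False
          have "x \<in> (\<lambda>k. k + a) ` {k. k + a \<in> U} \<longleftrightarrow> (\<exists>k. x = k + a \<and> k + a \<in> U)" by auto
          also have "\<dots> \<longleftrightarrow> x \<in> U" using False
            by (metis add.commute le_add_diff_inverse not_less)
          finally show ?thesis using False by auto
        qed
      qed
      then show ?thesis by simp
    qed
    show "(U \<inter> {..<a}, {k. k + a \<in> U}) \<in> Pow {..<a} \<times> Pow {..<b}" using U by auto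
  qed auto
  finally show ?thesis by simp
qed

definition D0 :: "'k::field elt \<Rightarrow> 'k elt2" where
  "D0 F = (\<lambda>d1 d2 s t. if d1 = d2 then F d1 (s @ t) else 0)"

lemma D0_dot: "D0 (dot F G) = dot2 (D0 F) (D0 G)"
proof (intro ext)
  fix d1 d2 s t
  show "D0 (dot F G) d1 d2 s t = dot2 (D0 F) (D0 G) d1 d2 s t"
  proof (cases "d1 = d2")
    case False then show ?thesis by (simp add: D0_def dot2_def)
  next
    case True
    have e1: "nths (s @ t) (S \<union> (\<lambda>k. k + length s) ` T) = nths s S @ nths t T"
      if "S \<subseteq> {..<length s}" for S T
      unfolding nths_append
      by (intro arg_cong2[where f="(@)"] nths_cong_lt) (use that in auto)
    have e2: "nths (s @ t) (- S \<inter> - (\<lambda>k. k + length s) ` T) = nths s (- S) @ nths t (- T)"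
      if "S \<subseteq> {..<length s}" for S T
      unfolding nths_append
      by (intro arg_cong2[where f="(@)"] nths_cong_lt) (use that in auto)
    show ?thesis using True
      unfolding D0_def dot_def dot2_def
      by (simp add: sum_pow_split e1 e2)
  qed
qed



definition Ej :: "nat \<Rightarrow> nat \<Rightarrow> 'k::field elt" where
  "Ej d j = (\<lambda>d' t. if d' = d \<and> t = [j] then 1 else 0)"

lemma dot_E:
  "dot (Ej d j) H d' t = (if d' = d then (\<Sum>k\<in>{k. k < length t \<and> t ! k = j}. H d (nths t (- {k}))) else 0)"
proof (cases "d' = d")
  case False then show ?thesis by (simp add: dot_def Ej_def)
next
  case True
  let ?K = "{k. k < length t \<and> t ! k = j}"
  have "dot (Ej d j) H d' t = (\<Sum>S\<in>Pow {..<length t}. (if nths t S = [j] then 1 else 0) * H d (nths t (- S)))"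
    using True by (simp add: dot_def Ej_def)
  also have "\<dots> = (\<Sum>S\<in>(\<lambda>k. {k}) ` ?K. H d (nths t (- S)))"
  proof (rule sum.mono_neutral_cong_right)
    show "(\<lambda>k. {k}) ` ?K \<subseteq> Pow {..<length t}" by auto
    show "\<forall>S\<in>Pow {..<length t} - (\<lambda>k. {k}) ` ?K. (if nths t S = [j] then 1 else 0) * H d (nths t (- S)) = 0"
    proof
      fix S assume S: "S \<in> Pow {..<length t} - (\<lambda>k. {k}) ` ?K"
      have "nths t S \<noteq> [j]"
      proof
        assume "nths t S = [j]"
        then obtain k where "k < length t" "S = {k}" "t ! k = j"
          using nths_eq_single[of S t j] S by auto
        then show False using S by auto
      qed
      then show "(if nths t S = [j] then 1 else 0) * H d (nths t (- S)) = 0" by simp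
    qed
    fix S assume "S \<in> (\<lambda>k. {k}) ` ?K"
      then obtain k where "S = {k}" "k < length t" "t ! k = j" by auto
      then show "(if nths t S = [j] then 1 else 0) * H d (nths t (- S)) = H d (nths t (- S))"
        using nths_single[of k t] by simp
  qed auto
  also have "\<dots> = (\<Sum>k\<in>?K. H d (nths t (- {k})))"
    by (subst sum.reindex) (auto simp: inj_on_def)
  finally show ?thesis using True by simp
qed

lemma card_K: "card {k. k < length t \<and> t ! k = j} = count (mset t) j"
  by (simp add: count_mset count_list_eq_length_filter length_filter_conv_card eq_commute)

lemma dot_E_sym:
  assumes sym: "\<And>u u'. mset u = mset u' \<Longrightarrow> F d u = F d u'"
  shows "dot (Ej d j) (\<lambda>d' u. F d' (j # u)) d' t = (if d' = d then of_nat (count (mset t) j) * F d t else 0)"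
proof -
  have "F d (j # nths t (- {k})) = F d t" if "k < length t" "t ! k = j" for k
  proof (rule sym)
    have "mset t = mset (nths t {k}) + mset (nths t (- {k}))" by (simp add: mset_nths_compl)
    then show "mset (j # nths t (- {k})) = mset t" using that nths_single[of k t] by simp
  qed
  then show ?thesis by (simp add: dot_E card_K)
qed



lemma is_elt_add:
  assumes F: "is_elt dim F" and G: "is_elt dim G"
  shows "is_elt dim (\<lambda>d t. F d t + G d t)"
proof -
  have F1: "finite {(d, t). F d t \<noteq> 0}" and F2: "\<And>d t. F d t \<noteq> 0 \<Longrightarrow> set t \<subseteq> {..<dim d}"
    and F3: "\<And>d t t'. mset t = mset t' \<Longrightarrow> F d t = F d t'"
    using F unfolding is_elt_iff by blast+
  have G1: "finite {(d, t). G d t \<noteq> 0}" and G2: "\<And>d t. G d t \<noteq> 0 \<Longrightarrow> set t \<subseteq> {..<dim d}"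
    and G3: "\<And>d t t'. mset t = mset t' \<Longrightarrow> G d t = G d t'"
    using G unfolding is_elt_iff by blast+
  show ?thesis unfolding is_elt_iff
  proof (intro conjI allI impI)
    show "finite {(d, t). F d t + G d t \<noteq> 0}"
      by (rule finite_subset[OF _ finite_UnI[OF F1 G1]]) auto
  next
    fix d t assume "F d t + G d t \<noteq> 0"
    then have "F d t \<noteq> 0 \<or> G d t \<noteq> 0" by auto
    then show "set t \<subseteq> {..<dim d}" using F2 G2 by blast
  next
    fix d and t t' :: "nat list" assume "mset t = mset t'"
    then show "F d t + G d t = F d t' + G d t'" using F3[of t t' d] G3[of t t' d] by simp
  qed
qed

lemma is_elt_scale:
  assumes F: "is_elt dim F"
  shows "is_elt dim (\<lambda>d t. a * F d t)"
proof -
  have F1: "finite {(d, t). F d t \<noteq> 0}" and F2: "\<And>d t. F d t \<noteq> 0 \<Longrightarrow> set t \<subseteq> {..<dim d}"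
    and F3: "\<And>d t t'. mset t = mset t' \<Longrightarrow> F d t = F d t'"
    using F unfolding is_elt_iff by blast+
  show ?thesis unfolding is_elt_iff
  proof (intro conjI allI impI)
    show "finite {(d, t). a * F d t \<noteq> 0}"
      by (rule finite_subset[OF _ F1]) auto
  next
    fix d t assume "a * F d t \<noteq> 0"
    then show "set t \<subseteq> {..<dim d}" using F2 by auto
  next
    fix d and t t' :: "nat list" assume "mset t = mset t'"
    then show "a * F d t = a * F d t'" using F3[of t t' d] by simp
  qed
qed

lemma is_elt_zero: "is_elt dim (\<lambda>d t. 0)"
  unfolding is_elt_iff by auto

lemma is_elt_sum: "finite J \<Longrightarrow> (\<forall>j\<in>J. is_elt dim (G j)) \<Longrightarrow> is_elt dim (\<lambda>d t. \<Sum>j\<in>J. G j d t)"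
proof (induction J rule: finite_induct)
  case empty then show ?case by (simp add: is_elt_zero)
next
  case (insert a J)
  then show ?case using is_elt_add[of dim "G a" "\<lambda>d t. \<Sum>j\<in>J. G j d t"] by simp
qed

lemma unit_is_elt: "is_elt dim (unit_elt d)"
  unfolding is_elt_iff unit_elt_def
proof (intro conjI)
  show "finite {(d', t). (if d' = d \<and> t = [] then 1 else 0) \<noteq> (0::'a)}"
    by (rule finite_subset[of _ "{(d, [])}"]) auto
qed auto

lemma Delta_add:
  "is_Delta dim \<Delta> \<Longrightarrow> is_elt dim F \<Longrightarrow> is_elt dim G \<Longrightarrow>
   \<Delta> (\<lambda>d t. F d t + G d t) = (\<lambda>d d' s t. \<Delta> F d d' s t + \<Delta> G d d' s t)"
  unfolding is_Delta_def by blast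

lemma Delta_scale:
  "is_Delta dim \<Delta> \<Longrightarrow> is_elt dim F \<Longrightarrow> \<Delta> (\<lambda>d t. a * F d t) = (\<lambda>d d' s t. a * \<Delta> F d d' s t)"
  unfolding is_Delta_def by blast

lemma Delta_dot:
  "is_Delta dim \<Delta> \<Longrightarrow> is_elt dim F \<Longrightarrow> is_elt dim G \<Longrightarrow> \<Delta> (dot F G) = dot2 (\<Delta> F) (\<Delta> G)"
  unfolding is_Delta_def by blast

lemma Delta_unit: "is_Delta dim \<Delta> \<Longrightarrow> \<Delta> (unit_elt d) = unit2 d"
  unfolding is_Delta_def by blast

lemma Delta_prim: "is_Delta dim \<Delta> \<Longrightarrow> is_hom_elt dim d 1 W \<Longrightarrow> \<Delta> W = prim d W"
  unfolding is_Delta_def by blast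

lemma Delta_zero:
  assumes "is_Delta dim \<Delta>"
  shows "\<Delta> (\<lambda>d t. 0) = (\<lambda>d d' s t. 0)"
proof -
  have "\<Delta> (\<lambda>d t. 0 * unit_elt 0 d t) = (\<lambda>d d' s t. 0 * \<Delta> (unit_elt 0) d d' s t)"
    using Delta_scale[OF assms unit_is_elt] .
  then show ?thesis by simp
qed

lemma Delta_sum:
  assumes D: "is_Delta dim \<Delta>"
  shows "finite J \<Longrightarrow> (\<forall>j\<in>J. is_elt dim (G j)) \<Longrightarrow>
     \<Delta> (\<lambda>d t. \<Sum>j\<in>J. G j d t) = (\<lambda>d d' s t. \<Sum>j\<in>J. \<Delta> (G j) d d' s t)"
proof (induction J rule: finite_induct)
  case empty then show ?case using Delta_zero[OF D] by simp
next
  case (insert a J)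
  have "\<Delta> (\<lambda>d t. \<Sum>j\<in>insert a J. G j d t) = \<Delta> (\<lambda>d t. G a d t + (\<Sum>j\<in>J. G j d t))"
    using insert by simp
  also have "\<dots> = (\<lambda>d d' s t. \<Delta> (G a) d d' s t + \<Delta> (\<lambda>d t. \<Sum>j\<in>J. G j d t) d d' s t)"
    using Delta_add[OF D, of "G a" "\<lambda>d t. \<Sum>j\<in>J. G j d t"] insert is_elt_sum[of J dim G] by simp
  finally show ?case using insert by simp
qed

lemma D0_prim:
  assumes "is_hom_elt dim d 1 W"
  shows "D0 W = prim d W"
proof (intro ext)
  fix d1 d2 s t
  have W0: "\<And>d' u. W d' u \<noteq> 0 \<Longrightarrow> d' = d \<and> length u = 1"
    using assms unfolding is_hom_elt_def by blast
  have Wz: "W d' u = 0" if "d' \<noteq> d \<or> length u \<noteq> 1" for d' u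
    using W0[of d' u] that by blast
  show "D0 W d1 d2 s t = prim d W d1 d2 s t"
  proof (cases "d1 = d \<and> d2 = d")
    case False
    then show ?thesis unfolding D0_def prim_def using Wz[of d1 "s @ t"] by auto
  next
    case True
    then have "D0 W d1 d2 s t = W d (s @ t)" "prim d W d1 d2 s t =
       (if s = [] then W d t else 0) + (if t = [] then W d s else 0)"
      unfolding D0_def prim_def by auto
    moreover have "W d [] = 0" using Wz by simp
    moreover have "W d (s @ t) = 0" if "s \<noteq> []" "t \<noteq> []"
      using Wz that by (cases s; cases t) auto
    ultimately show ?thesis by (cases "s = []"; cases "t = []") auto
  qed
qed


lemma homE_lem:
assumes that: "j < dim d"
shows "is_hom_elt dim d 1 (Ej d j :: 'a::field elt)"
  unfolding is_hom_elt_def is_elt_iff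
proof (intro conjI allI impI)
  show "finite {(d', u). (Ej d j :: 'a elt) d' u \<noteq> 0}"
    by (rule finite_subset[of _ "{(d, [j])}"]) (auto simp: Ej_def)
next
  fix d' u assume "(Ej d j :: 'a elt) d' u \<noteq> 0"
  then show "set u \<subseteq> {..<dim d'}" "d' = d" "length u = 1"
    using that unfolding Ej_def by (auto split: if_splits)
next
  fix d' u u' :: "nat list" and dd assume "mset u = mset u'"
  then have "u = [j] \<longleftrightarrow> u' = [j]" by (metis mset_single_iff)
  then show "(Ej d j :: 'a elt) dd u = Ej d j dd u'" unfolding Ej_def by simp
qed



lemma hom_unique:
  fixes \<Delta> :: "'a::field_char_0 elt \<Rightarrow> 'a elt2"
  assumes D: "is_Delta dim \<Delta>"
  shows "is_hom_elt dim d n F \<Longrightarrow> \<Delta> F = D0 F"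
proof (induction n arbitrary: F)
  case 0
  have F: "F = (\<lambda>d' t. F d [] * unit_elt d d' t)"
    using 0 by (intro ext) (auto simp: is_hom_elt_def unit_elt_def)
  have "\<Delta> F = \<Delta> (\<lambda>d' t. F d [] * unit_elt d d' t)" using F by simp
  also have "\<dots> = (\<lambda>d1 d2 s t. F d [] * \<Delta> (unit_elt d) d1 d2 s t)"
    using Delta_scale[OF D unit_is_elt] .
  also have "\<dots> = (\<lambda>d1 d2 s t. F d [] * unit2 d d1 d2 s t)"
    using Delta_unit[OF D] by simp
  also have "\<dots> = D0 F"
    by (subst (2) F) (auto simp: D0_def unit2_def unit_elt_def fun_eq_iff)
  finally show ?case .
next
  case (Suc n)
  have Fe: "is_elt dim F" and Fh: "\<And>d' t. F d' t \<noteq> 0 \<Longrightarrow> d' = d \<and> length t = Suc n"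
    using Suc.prems by (auto simp: is_hom_elt_def)
  have Ffin: "finite {(d, t). F d t \<noteq> 0}" and Fset: "\<And>d t. F d t \<noteq> 0 \<Longrightarrow> set t \<subseteq> {..<dim d}"
    and Fsym: "\<And>d t t'. mset t = mset t' \<Longrightarrow> F d t = F d t'"
    using Fe unfolding is_elt_iff by blast+
  define Fj where "Fj j = (\<lambda>d' u. F d' (j # u))" for j
  define G where "G j = dot (Ej d j) (Fj j)" for j
  have homFj: "is_hom_elt dim d n (Fj j)" for j
    unfolding is_hom_elt_def is_elt_iff
  proof (intro conjI allI impI)
    show "finite {(d', u). Fj j d' u \<noteq> 0}"
      by (rule finite_subset[OF _ finite_imageI[OF Ffin, of "\<lambda>(d', t). (d', tl t)"]])
         (force simp: Fj_def)
  next
    fix d' u assume "Fj j d' u \<noteq> 0"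
    then have nz: "F d' (j # u) \<noteq> 0" by (simp add: Fj_def)
    show "set u \<subseteq> {..<dim d'}" using Fset[OF nz] by simp
    show "d' = d" using Fh[OF nz] by simp
    show "length u = n" using Fh[OF nz] by simp
  next
    fix d' u u' :: "nat list" and dd assume "mset u = mset u'"
    then show "Fj j dd u = Fj j dd u'" unfolding Fj_def by (intro Fsym) simp
  qed
  have Gf: "G j = (\<lambda>d' t. if d' = d then of_nat (count (mset t) j) * F d t else 0)" for j
    unfolding G_def Fj_def by (intro ext dot_E_sym Fsym)
  have Ge: "is_elt dim (G j)" for j
    unfolding is_elt_iff Gf
  proof (intro conjI allI impI)
    show "finite {(d', t::nat list). (if d' = d then of_nat (count (mset t) j) * F d t else 0) \<noteq> 0}"
      by (rule finite_subset[OF _ Ffin]) (auto split: if_splits)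
  next
    fix d' and t :: "nat list" assume "(if d' = d then of_nat (count (mset t) j) * F d t else 0) \<noteq> 0"
    then show "set t \<subseteq> {..<dim d'}" using Fset by (auto split: if_splits)
  next
    fix d' and t t' :: "nat list" assume "mset t = mset t'"
    then show "(if d' = d then of_nat (count (mset t) j) * F d t else 0) =
       (if d' = d then of_nat (count (mset t') j) * F d t' else (0::'a))"
      using Fsym[of t t'] by simp
  qed
  have DG: "\<Delta> (G j) = D0 (G j)" if "j < dim d" for j
  proof -
    have "\<Delta> (G j) = dot2 (\<Delta> (Ej d j)) (\<Delta> (Fj j))"
      unfolding G_def using Delta_dot[OF D] homE_lem[of j dim d, OF that] homFj unfolding is_hom_elt_def by blast
    also have "\<Delta> (Ej d j) = D0 (Ej d j)"
      using Delta_prim[OF D homE_lem[of j dim d, OF that]] D0_prim[OF homE_lem[of j dim d, OF that]] by (rule trans[OF _ sym])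
    also have "\<Delta> (Fj j) = D0 (Fj j)" using Suc.IH[OF homFj] .
    finally show ?thesis by (simp add: G_def D0_dot)
  qed
  have Fdec: "F = (\<lambda>d' t. inverse (of_nat (Suc n)) * (\<Sum>j<dim d. G j d' t))"
  proof (intro ext)
    fix d' t
    show "F d' t = inverse (of_nat (Suc n)) * (\<Sum>j<dim d. G j d' t)"
    proof (cases "F d' t = 0")
      case True
      have "G j d' t = 0" for j using True by (cases "d' = d") (simp_all add: Gf)
      then show ?thesis using True by simp
    next
      case False
      then have "d' = d" "length t = Suc n" "set t \<subseteq> {..<dim d}" using Fh Fset by blast+
      then have "(\<Sum>j<dim d. G j d' t) = of_nat (Suc n) * F d t"
        by (simp add: Gf sum_distrib_right[symmetric] sum_count_len flip: of_nat_sum)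
      moreover have "(of_nat (Suc n) :: 'a) \<noteq> 0" by (rule of_nat_neq_0)
      ultimately show ?thesis using \<open>d' = d\<close> by simp
    qed
  qed
  have "\<Delta> F = \<Delta> (\<lambda>d' t. inverse (of_nat (Suc n)) * (\<Sum>j<dim d. G j d' t))"
    using Fdec by simp
  also have "\<dots> = (\<lambda>d1 d2 s t. inverse (of_nat (Suc n)) * \<Delta> (\<lambda>d' t. \<Sum>j<dim d. G j d' t) d1 d2 s t)"
    using Delta_scale[OF D is_elt_sum[of "{..<dim d}" dim G]] Ge by blast
  also have "\<dots> = (\<lambda>d1 d2 s t. inverse (of_nat (Suc n)) * (\<Sum>j<dim d. D0 (G j) d1 d2 s t))"
    using Delta_sum[OF D, of "{..<dim d}" G] Ge DG by simp
  also have "\<dots> = D0 F"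
    by (subst Fdec) (auto simp: D0_def fun_eq_iff sum_distrib_left)
  finally show ?case .
qed



lemma finite_tuples: "finite (tuples dim d n)"
proof -
  have "tuples dim d n = {xs. set xs \<subseteq> {..<dim d} \<and> length xs = n}"
    unfolding tuples_def by auto
  then show ?thesis using finite_lists_length_eq[of "{..<dim d}" n] by simp
qed

lemma prod_lessThan_add:
  fixes h :: "nat \<Rightarrow> 'a::comm_monoid_mult"
  shows "(\<Prod>j<a+b. h j) = (\<Prod>j<a. h j) * (\<Prod>j<b. h (j + a))"
  by (induction b) (simp_all add: ac_simps)

lemma coefprod_append:
  assumes "length s1 = length s" "length s2 = length s" "length t1 = length t" "length t2 = length t"
  shows "coefprod c d e (s1 @ t1) (s2 @ t2) (s @ t) = coefprod c d e s1 s2 s * coefprod c d e t1 t2 t"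
  unfolding coefprod_def
  by (simp add: prod_lessThan_add nth_append assms)

lemma sum_tuples_split:
  "(\<Sum>u\<in>tuples dim k (a+b). g u) = (\<Sum>p\<in>tuples dim k a. \<Sum>q\<in>tuples dim k b. g (p @ q))"
proof -
  let ?A = "tuples dim k a \<times> tuples dim k b"
  have img: "(\<lambda>(p, q). p @ q) ` ?A = tuples dim k (a+b)"
  proof
    show "(\<lambda>(p, q). p @ q) ` ?A \<subseteq> tuples dim k (a+b)" by (auto simp: tuples_def)
    show "tuples dim k (a+b) \<subseteq> (\<lambda>(p, q). p @ q) ` ?A"
    proof
      fix u assume u: "u \<in> tuples dim k (a+b)"
      have "(take a u, drop a u) \<in> ?A" using u set_take_subset[of a u] set_drop_subset[of a u]
        by (auto simp: tuples_def)
      then show "u \<in> (\<lambda>(p, q). p @ q) ` ?A" by (intro image_eqI[of _ _ "(take a u, drop a u)"]) auto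
    qed
  qed
  have inj: "inj_on (\<lambda>(p, q). p @ q) ?A"
    by (auto simp: inj_on_def tuples_def)
  have "(\<Sum>u\<in>tuples dim k (a+b). g u) = (\<Sum>pq\<in>?A. g (case pq of (p, q) \<Rightarrow> p @ q))"
    by (subst img[symmetric], subst sum.reindex[OF inj]) (simp add: comp_def)
  also have "\<dots> = (\<Sum>p\<in>tuples dim k a. \<Sum>q\<in>tuples dim k b. g (p @ q))"
    by (simp add: sum.cartesian_product split_beta)
  finally show ?thesis .
qed

lemma sum_single_nat:
  assumes "finite A" "a \<in> A" "\<And>b. b \<in> A \<Longrightarrow> b \<noteq> a \<Longrightarrow> f b = 0"
  shows "sum f A = (f a :: 'a::comm_monoid_add)"
proof -
  have "sum f A = f a + sum f (A - {a})" using assms(1,2) by (rule sum.remove)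
  also have "sum f (A - {a}) = 0" using assms(3) by (intro sum.neutral) auto
  finally show ?thesis by simp
qed

lemma star2_D0: "star2 dim c (D0 x) (D0 v) = D0 (star dim c x v)"
proof (intro ext)
  fix D D' s t
  show "star2 dim c (D0 x) (D0 v) D D' s t = D0 (star dim c x v) D D' s t"
  proof (cases "set s \<subseteq> {..<dim D} \<and> set t \<subseteq> {..<dim D'}")
    case False
    then show ?thesis by (auto simp: star2_def D0_def star_def)
  next
    case True
    show ?thesis
    proof (cases "D = D'")
      case False
      have "star2 dim c (D0 x) (D0 v) D D' s t = 0"
        unfolding star2_def D0_def using False
        by (auto intro!: sum.neutral)
      then show ?thesis using False by (simp add: D0_def)
    next
      case eq: True
      let ?cp = "\<lambda>d1 u u' w. coefprod c d1 (D - d1) u u' w"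
      have step: "(\<Sum>d1'\<le>D'. \<Sum>s1\<in>tuples dim d1 (length s). \<Sum>s2\<in>tuples dim (D - d1) (length s).
           \<Sum>t1\<in>tuples dim d1' (length t). \<Sum>t2\<in>tuples dim (D' - d1') (length t).
             D0 x d1 d1' s1 t1 * D0 v (D - d1) (D' - d1') s2 t2
             * coefprod c d1 (D - d1) s1 s2 s * coefprod c d1' (D' - d1') t1 t2 t)
        = (\<Sum>u\<in>tuples dim d1 (length (s @ t)). \<Sum>u'\<in>tuples dim (D - d1) (length (s @ t)).
             x d1 u * v (D - d1) u' * ?cp d1 u u' (s @ t))"
        if d1: "d1 \<le> D" for d1
      proof -
        have "(\<Sum>d1'\<le>D'. \<Sum>s1\<in>tuples dim d1 (length s). \<Sum>s2\<in>tuples dim (D - d1) (length s).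
           \<Sum>t1\<in>tuples dim d1' (length t). \<Sum>t2\<in>tuples dim (D' - d1') (length t).
             D0 x d1 d1' s1 t1 * D0 v (D - d1) (D' - d1') s2 t2
             * coefprod c d1 (D - d1) s1 s2 s * coefprod c d1' (D' - d1') t1 t2 t)
          = (\<Sum>s1\<in>tuples dim d1 (length s). \<Sum>s2\<in>tuples dim (D - d1) (length s).
           \<Sum>t1\<in>tuples dim d1 (length t). \<Sum>t2\<in>tuples dim (D - d1) (length t).
             x d1 (s1 @ t1) * v (D - d1) (s2 @ t2)
             * ?cp d1 s1 s2 s * ?cp d1 t1 t2 t)"
          by (subst sum_single_nat[where a = d1]) (use d1 eq in \<open>auto simp: D0_def\<close>)
        also have "\<dots> = (\<Sum>s1\<in>tuples dim d1 (length s). \<Sum>t1\<in>tuples dim d1 (length t).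
             \<Sum>s2\<in>tuples dim (D - d1) (length s). \<Sum>t2\<in>tuples dim (D - d1) (length t).
             x d1 (s1 @ t1) * v (D - d1) (s2 @ t2)
             * ?cp d1 s1 s2 s * ?cp d1 t1 t2 t)"
          by (intro sum.cong refl sum.swap)
        also have "\<dots> = (\<Sum>s1\<in>tuples dim d1 (length s). \<Sum>t1\<in>tuples dim d1 (length t).
             \<Sum>s2\<in>tuples dim (D - d1) (length s). \<Sum>t2\<in>tuples dim (D - d1) (length t).
             x d1 (s1 @ t1) * v (D - d1) (s2 @ t2) * ?cp d1 (s1 @ t1) (s2 @ t2) (s @ t))"
          by (intro sum.cong refl) (simp add: coefprod_append tuples_def)
        also have "\<dots> = (\<Sum>u\<in>tuples dim d1 (length (s @ t)). \<Sum>u'\<in>tuples dim (D - d1) (length (s @ t)).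
             x d1 u * v (D - d1) u' * ?cp d1 u u' (s @ t))"
          by (simp add: sum_tuples_split)
        finally show ?thesis .
      qed
      have "star2 dim c (D0 x) (D0 v) D D' s t
         = (\<Sum>d1\<le>D. \<Sum>d1'\<le>D'. \<Sum>s1\<in>tuples dim d1 (length s). \<Sum>s2\<in>tuples dim (D - d1) (length s).
           \<Sum>t1\<in>tuples dim d1' (length t). \<Sum>t2\<in>tuples dim (D' - d1') (length t).
             D0 x d1 d1' s1 t1 * D0 v (D - d1) (D' - d1') s2 t2
             * coefprod c d1 (D - d1) s1 s2 s * coefprod c d1' (D' - d1') t1 t2 t)"
        using True by (simp add: star2_def)
      also have "\<dots> = (\<Sum>d1\<le>D. \<Sum>u\<in>tuples dim d1 (length (s @ t)). \<Sum>u'\<in>tuples dim (D - d1) (length (s @ t)).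
             x d1 u * v (D - d1) u' * ?cp d1 u u' (s @ t))"
        by (intro sum.cong refl step) simp
      also have "\<dots> = D0 (star dim c x v) D D' s t"
        using True eq by (simp add: D0_def star_def)
      finally show ?thesis .
    qed
  qed
qed



lemma pl_inv1:
  assumes p: "p permutes {..<length s}"
  shows "permute_list (inv p) (permute_list p s) = s"
proof -
  have pi: "inv p permutes {..<length s}" using p by (rule permutes_inv)
  have "permute_list (p \<circ> inv p) s = permute_list (inv p) (permute_list p s)"
    by (rule permute_list_compose) (simp add: pi)
  then show ?thesis by (simp add: permutes_inv_o(1)[OF p])
qed

lemma pl_inv2:
  assumes p: "p permutes {..<length s}"
  shows "permute_list p (permute_list (inv p) s) = s"
proof -
  have "permute_list (inv p \<circ> p) s = permute_list p (permute_list (inv p) s)"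
    by (rule permute_list_compose) (simp add: p)
  then show ?thesis by (simp add: permutes_inv_o(2)[OF p])
qed

lemma set_pl: "p permutes {..<length s} \<Longrightarrow> set (permute_list p s) = set s"
  by (metis mset_permute_list set_mset_mset)

lemma perm_sum_tuples:
  assumes p: "p permutes {..<m}"
  shows "(\<Sum>s\<in>tuples dim k m. g s) = (\<Sum>s\<in>tuples dim k m. g (permute_list p s))"
proof -
  have pi: "inv p permutes {..<m}" using p by (rule permutes_inv)
  show ?thesis
  proof (rule sum.reindex_bij_witness[where j = "permute_list (inv p)" and i = "permute_list p"])
    fix s assume s: "s \<in> tuples dim k m"
    then have l: "length s = m" by (simp add: tuples_def)
    show "permute_list (inv p) (permute_list p s) = s" using pl_inv1[of p s] p l by simp
    show "permute_list p (permute_list (inv p) s) = s" using pl_inv2[of p s] p l by simp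
    show "permute_list p s \<in> tuples dim k m" using s set_pl[of p s] p l by (simp add: tuples_def)
    show "permute_list (inv p) s \<in> tuples dim k m" using s set_pl[of "inv p" s] pi l by (simp add: tuples_def)
    show "g (permute_list p (permute_list (inv p) s)) = g s" using pl_inv2[of p s] p l by simp
  qed
qed

lemma perm_sum_tuples2:
  assumes p: "p permutes {..<m}"
  shows "(\<Sum>s\<in>tuples dim k m. \<Sum>s'\<in>tuples dim k' m. g s s')
       = (\<Sum>s\<in>tuples dim k m. \<Sum>s'\<in>tuples dim k' m. g (permute_list p s) (permute_list p s'))"
proof -
  have "(\<Sum>s\<in>tuples dim k m. \<Sum>s'\<in>tuples dim k' m. g s s')
       = (\<Sum>s\<in>tuples dim k m. \<Sum>s'\<in>tuples dim k' m. g s (permute_list p s'))"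
    by (intro sum.cong refl perm_sum_tuples[OF p, where g = "g s" for s])
  also have "\<dots> = (\<Sum>s\<in>tuples dim k m. \<Sum>s'\<in>tuples dim k' m. g (permute_list p s) (permute_list p s'))"
    by (rule perm_sum_tuples[OF p, where g = "\<lambda>s. \<Sum>s'\<in>tuples dim k' m. g s (permute_list p s')"])
  finally show ?thesis .
qed

lemma coefprod_perm:
  assumes p: "p permutes {..<length t}" and "length s = length t" "length s' = length t"
  shows "coefprod c a b (permute_list p s) (permute_list p s') (permute_list p t) = coefprod c a b s s' t"
proof -
  have "coefprod c a b (permute_list p s) (permute_list p s') (permute_list p t)
      = (\<Prod>j<length t. c a b (s ! p j) (s' ! p j) (t ! p j))"
  proof -
    have ps: "p permutes {..<length s}" "p permutes {..<length s'}" using assms by simp_all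
    show ?thesis unfolding coefprod_def length_permute_list
    proof (intro prod.cong refl)
      fix j assume "j \<in> {..<length t}"
      then have j: "j < length t" "j < length s" "j < length s'" using assms by auto
      show "c a b (permute_list p s ! j) (permute_list p s' ! j) (permute_list p t ! j) =
         c a b (s ! p j) (s' ! p j) (t ! p j)"
        using permute_list_nth[OF ps(1) j(2)] permute_list_nth[OF ps(2) j(3)] permute_list_nth[OF p j(1)]
        by simp
    qed
  qed
  also have "\<dots> = (\<Prod>j<length t. c a b (s ! j) (s' ! j) (t ! j))"
    using prod.permute[OF p, of "\<lambda>j. c a b (s ! j) (s' ! j) (t ! j)"] by (simp add: comp_def)
  finally show ?thesis by (simp add: coefprod_def)
qed

lemma star_sym:
  assumes xs: "\<And>d t t'. mset t = mset t' \<Longrightarrow> x d t = x d t'"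
    and vs: "\<And>d t t'. mset t = mset t' \<Longrightarrow> v d t = v d t'"
    and m: "mset t = mset t'"
  shows "star dim c x v D t = star dim c x v D t'"
proof -
  obtain p where p: "p permutes {..<length t'}" and pt: "permute_list p t' = t"
    using mset_eq_permutation[OF m] by blast
  have st: "set t = set t'" using m by (metis set_mset_mset)
  have lt: "length t = length t'" using pt by auto
  have inner: "(\<Sum>s\<in>tuples dim d1 (length t'). \<Sum>s'\<in>tuples dim (D - d1) (length t').
        x d1 s * v (D - d1) s' * coefprod c d1 (D - d1) s s' (permute_list p t'))
      = (\<Sum>s\<in>tuples dim d1 (length t'). \<Sum>s'\<in>tuples dim (D - d1) (length t').
        x d1 s * v (D - d1) s' * coefprod c d1 (D - d1) s s' t')" for d1
  proof -
    have "(\<Sum>s\<in>tuples dim d1 (length t'). \<Sum>s'\<in>tuples dim (D - d1) (length t').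
        x d1 s * v (D - d1) s' * coefprod c d1 (D - d1) s s' (permute_list p t'))
      = (\<Sum>s\<in>tuples dim d1 (length t'). \<Sum>s'\<in>tuples dim (D - d1) (length t').
        x d1 (permute_list p s) * v (D - d1) (permute_list p s') *
          coefprod c d1 (D - d1) (permute_list p s) (permute_list p s') (permute_list p t'))"
      by (rule perm_sum_tuples2[OF p])
    also have "\<dots> = (\<Sum>s\<in>tuples dim d1 (length t'). \<Sum>s'\<in>tuples dim (D - d1) (length t').
        x d1 s * v (D - d1) s' * coefprod c d1 (D - d1) s s' t')"
    proof (intro sum.cong refl)
      fix s s' assume s: "s \<in> tuples dim d1 (length t')" and s': "s' \<in> tuples dim (D - d1) (length t')"
      have ls: "length s = length t'" "length s' = length t'" using s s' by (auto simp: tuples_def)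
      have "x d1 (permute_list p s) = x d1 s" using p ls by (intro xs) simp
      moreover have "v (D - d1) (permute_list p s') = v (D - d1) s'" using p ls by (intro vs) simp
      moreover have "coefprod c d1 (D - d1) (permute_list p s) (permute_list p s') (permute_list p t')
          = coefprod c d1 (D - d1) s s' t'" using coefprod_perm[OF p ls] .
      ultimately show "x d1 (permute_list p s) * v (D - d1) (permute_list p s') *
          coefprod c d1 (D - d1) (permute_list p s) (permute_list p s') (permute_list p t')
        = x d1 s * v (D - d1) s' * coefprod c d1 (D - d1) s s' t'" by simp
    qed
    finally show ?thesis .
  qed
  have "star dim c x v D (permute_list p t') = star dim c x v D t'"
    unfolding star_def length_permute_list set_pl[OF p] using inner by simp
  then show ?thesis using pt by simp
qed

lemma star_hom:
  assumes x: "is_hom_elt dim e n x" and v: "is_hom_elt dim d n v"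
  shows "is_hom_elt dim (d + e) n (star dim c x v)"
proof -
  have xz: "\<And>d1 s. x d1 s \<noteq> 0 \<Longrightarrow> d1 = e \<and> length s = n"
    and vz: "\<And>d1 s. v d1 s \<noteq> 0 \<Longrightarrow> d1 = d \<and> length s = n"
    using x v unfolding is_hom_elt_def by blast+
  have xs: "\<And>d t t'. mset t = mset t' \<Longrightarrow> x d t = x d t'"
    and vs: "\<And>d t t'. mset t = mset t' \<Longrightarrow> v d t = v d t'"
    using x v unfolding is_hom_elt_def is_elt_iff by blast+
  have nz: "D = d + e \<and> length t = n \<and> set t \<subseteq> {..<dim D}" if H: "star dim c x v D t \<noteq> 0" for D t
  proof -
    have st: "set t \<subseteq> {..<dim D}" using H by (auto simp: star_def split: if_splits)
    have "(\<Sum>d1\<le>D. \<Sum>s\<in>tuples dim d1 (length t). \<Sum>s'\<in>tuples dim (D - d1) (length t).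
         x d1 s * v (D - d1) s' * coefprod c d1 (D - d1) s s' t) \<noteq> 0"
      using H st by (simp add: star_def)
    then obtain d1 where d1: "d1 \<in> {..D}" and h1:
      "(\<Sum>s\<in>tuples dim d1 (length t). \<Sum>s'\<in>tuples dim (D - d1) (length t).
         x d1 s * v (D - d1) s' * coefprod c d1 (D - d1) s s' t) \<noteq> 0"
      by (rule sum.not_neutral_contains_not_neutral)
    from h1 obtain s where s: "s \<in> tuples dim d1 (length t)" and h2:
      "(\<Sum>s'\<in>tuples dim (D - d1) (length t). x d1 s * v (D - d1) s' * coefprod c d1 (D - d1) s s' t) \<noteq> 0"
      by (rule sum.not_neutral_contains_not_neutral)
    from h2 obtain s' where "x d1 s * v (D - d1) s' * coefprod c d1 (D - d1) s s' t \<noteq> 0"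
      by (rule sum.not_neutral_contains_not_neutral)
    then have "x d1 s \<noteq> 0" "v (D - d1) s' \<noteq> 0" by auto
    then have "d1 = e" "length s = n" "D - d1 = d" using xz vz by blast+
    moreover have "length s = length t" using s by (simp add: tuples_def)
    ultimately show ?thesis using d1 st by auto
  qed
  show ?thesis
    unfolding is_hom_elt_def is_elt_iff
  proof (intro conjI allI impI)
    have "{(D, t). star dim c x v D t \<noteq> 0} \<subseteq> {d + e} \<times> tuples dim (d + e) n"
      by (auto simp: tuples_def dest!: nz)
    then show "finite {(D, t). star dim c x v D t \<noteq> 0}"
      by (rule finite_subset) (simp add: finite_tuples)
  next
    fix D t assume "star dim c x v D t \<noteq> 0"
    then show "set t \<subseteq> {..<dim D}" "D = d + e" "length t = n" using nz by blast+
  next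
    fix D and t t' :: "nat list" assume "mset t = mset t'"
    then show "star dim c x v D t = star dim c x v D t'" using star_sym[OF xs vs, where t=t and t'=t' and dim=dim and c=c and D=D] by simp
  qed
qed


theorem lemma3p4:
  fixes dim :: "nat \<Rightarrow> nat"
    and c :: "nat \<Rightarrow> nat \<Rightarrow> nat \<Rightarrow> nat \<Rightarrow> nat \<Rightarrow> 'k::field_char_0"
    and \<Delta> :: "'k elt \<Rightarrow> 'k elt2"
    and x y v :: "'k elt"
    and d e n m :: nat
  assumes "graded_alg dim c"
    and "is_Delta dim \<Delta>"
    and "is_hom_elt dim e n x"
    and "is_hom_elt dim d m y"
    and "is_hom_elt dim d n v"
  shows "\<Delta> (dot y v) = dot2 (\<Delta> y) (\<Delta> v)
       \<and> \<Delta> (star dim c x v) = star2 dim c (\<Delta> x) (\<Delta> v)"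
proof
  have ye: "is_elt dim y" and ve: "is_elt dim v"
    using assms(4,5) unfolding is_hom_elt_def by blast+
  show "\<Delta> (dot y v) = dot2 (\<Delta> y) (\<Delta> v)" by (rule Delta_dot[OF assms(2) ye ve])
  have 1: "\<Delta> (star dim c x v) = D0 (star dim c x v)"
    by (rule hom_unique[OF assms(2) star_hom[OF assms(3) assms(5)]])
  have 2: "\<Delta> x = D0 x" by (rule hom_unique[OF assms(2) assms(3)])
  have 3: "\<Delta> v = D0 v" by (rule hom_unique[OF assms(2) assms(5)])
  show "\<Delta> (star dim c x v) = star2 dim c (\<Delta> x) (\<Delta> v)"
    unfolding 1 2 3 by (rule star2_D0[symmetric])
qed

end
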